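(* Consider the problem $$\min_{\pi}\ \mathrm{THR}(\pi)\quad\text{subject to}\quad R(\pi)\ge\lambda .$$ (a) If $\lambda\le\mathbb{E}[Y(0)]$, then $\pi^*_\lambda(X)\equiv 0$ is an optimal ITR, and $\mathrm{THR}(\pi^*_\lambda)=0$. (b) Suppose $\mathbb{E}[\tau(X)\,\mathbb{I}(\mathrm{THR}(X)=0)]>0$. - If $\mathbb{E}[Y(0)]<\lambda\le\mathbb{E}[Y(0)]+\mathbb{E}[\tau(X)\,\mathbb{I}(\mathrm{THR}(X)=0)]$, then $\pi^*_\lambda(X)=\mathbb{I}(\mathrm{THR}(X)=0)$ is an optimal ITR, and $\mathrm{THR}(\pi^*_\lambda)=0$. - If $\mathbb{E}[Y(0)]+\mathbb{E}[\tau(X)\,\mathbb{I}(\mathrm{THR}(X)=0)]<\lambda\le\mathbb{E}[Y(0)]+\mathbb{E}[\tau(X)\,\mathbb{I}(\tau(X)>0)]$, then the optimal ITR is $\pi^*_\lambda(X)=\mathbb{I}(\beta^*\tau(X)-\mathrm{THR}(X)>0)$, where $\beta^*$ satisfies $\mathbb{E}[Y(0)]+\mathbb{E}[\tau(X)\,\mathbb{I}(\beta^*\tau(X)-\mathrm{THR}(X)>0)]=\lambda$. - If $\mathbb{E}[Y(0)]+\mathbb{E}[\tau(X)\,\mathbb{I}(\tau(X)>0)]<\lambda$, then no solution exists. (c) Suppose $\mathbb{E}[\tau(X)\,\mathbb{I}(\mathrm{THR}(X)=0)]\le 0$. - If $\mathbb{E}[Y(0)]<\lambda\le\mathbb{E}[Y(0)]+\mathbb{E}[\tau(X)\,\mathbb{I}(\tau(X)>0)]$,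 then the optimal ITR is $\pi^*_\lambda(X)=\mathbb{I}(\beta^*\tau(X)-\mathrm{THR}(X)>0)$, where $\beta^*$ satisfies $\mathbb{E}[Y(0)]+\mathbb{E}[\tau(X)\,\mathbb{I}(\beta^*\tau(X)-\mathrm{THR}(X)>0)]=\lambda$. - If $\mathbb{E}[Y(0)]+\mathbb{E}[\tau(X)\,\mathbb{I}(\tau(X)>0)]<\lambda$, then no solution exists.
   Context: Setting. Tuples $\{X,A,Y(1),Y(0)\}$ are drawn from a superpopulation, with covariates $X\in\mathcal X$ and binary potential outcomes $Y(a)\in\{0,1\}$. Notation: - $\tau(x)=\mathbb{E}\{Y(1)-Y(0)\mid X=x\}$. - $\mathrm{THR}(x)=\mathbb{P}(Y(0)=1,Y(1)=0\mid X=x)$. - An individualized treatment rule (ITR) is a map $\pi:\mathcal X\to\{0,1\}$. - $R(\pi)=\mathbb{E}[\pi(X)Y(1)+\{1-\pi(X)\}Y(0)]$. - $\mathrm{THR}(\pi)=\mathbb{E}\{\mathrm{THR}(X)\pi(X)\}$. - $\lambda$ is a given threshold. *)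

theory Defs
  imports "HOL-Probability.Probability"
begin

text \<open>M is the distribution of the covariate X on the
space of covariates. The joint law of (Y(1),Y(0)) given X is encoded by
q x a b = P(Y(1) = a, Y(0) = b | X = x) (a version of the conditional probabilities,
which always exists since the outcome space {0,1}x{0,1} is finite).\<close>

definition valid_model :: "'x measure \<Rightarrow> ('x \<Rightarrow> bool \<Rightarrow> bool \<Rightarrow> real) \<Rightarrow> bool" where
  "valid_model M q \<longleftrightarrow> prob_space M
     \<and> (\<forall>a b. (\<lambda>x. q x a b) \<in> borel_measurable M)
     \<and> (\<forall>x a b. 0 \<le> q x a b)
     \<and> (\<forall>x. q x True True + q x True False + q x False True + q x False False = 1)"

definition mu1 :: "('x \<Rightarrow> bool \<Rightarrow> bool \<Rightarrow> real) \<Rightarrow> 'x \<Rightarrow> real" where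
  "mu1 q x = q x True True + q x True False"

definition mu0 :: "('x \<Rightarrow> bool \<Rightarrow> bool \<Rightarrow> real) \<Rightarrow> 'x \<Rightarrow> real" where
  "mu0 q x = q x True True + q x False True"

definition tau :: "('x \<Rightarrow> bool \<Rightarrow> bool \<Rightarrow> real) \<Rightarrow> 'x \<Rightarrow> real" where
  "tau q x = mu1 q x - mu0 q x"

definition THRx :: "('x \<Rightarrow> bool \<Rightarrow> bool \<Rightarrow> real) \<Rightarrow> 'x \<Rightarrow> real" where
  "THRx q x = q x False True"

definition EY0 :: "'x measure \<Rightarrow> ('x \<Rightarrow> bool \<Rightarrow> bool \<Rightarrow> real) \<Rightarrow> real" where
  "EY0 M q = (\<integral>x. mu0 q x \<partial>M)"

text \<open>An ITR is a (measurable) map from covariates to {0,1}; True means treat.\<close>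
definition itr :: "'x measure \<Rightarrow> ('x \<Rightarrow> bool) \<Rightarrow> bool" where
  "itr M \<pi> \<longleftrightarrow> \<pi> \<in> M \<rightarrow>\<^sub>M count_space UNIV"

text \<open>R(pi) = E[pi(X) Y(1) + (1 - pi(X)) Y(0)], computed by conditioning on X.\<close>
definition Rval :: "'x measure \<Rightarrow> ('x \<Rightarrow> bool \<Rightarrow> bool \<Rightarrow> real) \<Rightarrow> ('x \<Rightarrow> bool) \<Rightarrow> real" where
  "Rval M q \<pi> = (\<integral>x. of_bool (\<pi> x) * mu1 q x + (1 - of_bool (\<pi> x)) * mu0 q x \<partial>M)"

definition THRpol :: "'x measure \<Rightarrow> ('x \<Rightarrow> bool \<Rightarrow> bool \<Rightarrow> real) \<Rightarrow> ('x \<Rightarrow> bool) \<Rightarrow> real" where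
  "THRpol M q \<pi> = (\<integral>x. THRx q x * of_bool (\<pi> x) \<partial>M)"

definition feasible :: "'x measure \<Rightarrow> ('x \<Rightarrow> bool \<Rightarrow> bool \<Rightarrow> real) \<Rightarrow> real \<Rightarrow> ('x \<Rightarrow> bool) \<Rightarrow> bool" where
  "feasible M q lam \<pi> \<longleftrightarrow> itr M \<pi> \<and> Rval M q \<pi> \<ge> lam"

definition optimal :: "'x measure \<Rightarrow> ('x \<Rightarrow> bool \<Rightarrow> bool \<Rightarrow> real) \<Rightarrow> real \<Rightarrow> ('x \<Rightarrow> bool) \<Rightarrow> bool" where
  "optimal M q lam \<pi> \<longleftrightarrow> feasible M q lam \<pi>
     \<and> (\<forall>\<pi>'. feasible M q lam \<pi>' \<longrightarrow> THRpol M q \<pi> \<le> THRpol M q \<pi>')"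

end

theory Submission imports Defs begin

lemma vm_prob: "valid_model M q \<Longrightarrow> prob_space M"
  by (simp add: valid_model_def)

lemma vm_meas: "valid_model M q \<Longrightarrow> (\<lambda>x. q x a b) \<in> borel_measurable M"
  by (simp add: valid_model_def)

lemma vm_bnd: assumes "valid_model M q" shows "0 \<le> q x a b" "q x a b \<le> 1"
proof -
  have h: "\<forall>x a b. 0 \<le> q x a b" "q x True True + q x True False + q x False True + q x False False = 1"
    using assms by (auto simp: valid_model_def)
  show "0 \<le> q x a b" using h by blast
  show "q x a b \<le> 1" using h(2) h(1)[rule_format, of x True True] h(1)[rule_format, of x True False]
    h(1)[rule_format, of x False True] h(1)[rule_format, of x False False]
    by (induct a; induct b; linarith)
qed

lemma tau_meas [measurable]: "valid_model M q \<Longrightarrow> tau q \<in> borel_measurable M"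
  unfolding tau_def mu1_def mu0_def using vm_meas[of M q] by measurable

lemma mu0_meas [measurable]: "valid_model M q \<Longrightarrow> mu0 q \<in> borel_measurable M"
  unfolding mu0_def using vm_meas[of M q] by measurable

lemma mu1_meas [measurable]: "valid_model M q \<Longrightarrow> mu1 q \<in> borel_measurable M"
  unfolding mu1_def using vm_meas[of M q] by measurable

lemma thr_meas [measurable]: "valid_model M q \<Longrightarrow> THRx q \<in> borel_measurable M"
  unfolding THRx_def using vm_meas[of M q] by measurable

lemma tau_bnd: "valid_model M q \<Longrightarrow> \<bar>tau q x\<bar> \<le> 1"
  unfolding tau_def mu1_def mu0_def using vm_bnd[of M q x True True] vm_bnd[of M q x True False] vm_bnd[of M q x False True]
  by linarith

lemma thr_bnd: "valid_model M q \<Longrightarrow> 0 \<le> THRx q x \<and> THRx q x \<le> 1"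
  unfolding THRx_def using vm_bnd[of M q x False True] by auto

lemma mu0_bnd: assumes "valid_model M q" shows "\<bar>mu0 q x\<bar> \<le> 1"
  unfolding mu0_def using vm_bnd[of M q x True True] vm_bnd[of M q x False True] vm_bnd[of M q x True False] vm_bnd[of M q x False False] assms[unfolded valid_model_def]
  unfolding abs_le_iff using assms by (smt (verit))

lemma intg: assumes "valid_model M q" "f \<in> borel_measurable M" "\<And>x. \<bar>f x\<bar> \<le> (C::real)"
  shows "integrable M f"
proof -
  interpret prob_space M using vm_prob[OF assms(1)] .
  show ?thesis by (rule integrable_const_bound[where B=C]) (use assms in auto)
qed

lemma itr_meas: "itr M \<pi> \<Longrightarrow> (\<lambda>x. of_bool (\<pi> x) :: real) \<in> borel_measurable M"
  unfolding itr_def by measurable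

lemma int_tau_pi: assumes "valid_model M q" "itr M \<pi>"
  shows "integrable M (\<lambda>x. tau q x * of_bool (\<pi> x))"
  using assms by (intro intg[where C=1]) (auto intro: borel_measurable_times tau_meas itr_meas simp: tau_bnd)

lemma int_thr_pi: assumes "valid_model M q" "itr M \<pi>"
  shows "integrable M (\<lambda>x. THRx q x * of_bool (\<pi> x))"
  using assms thr_bnd[OF assms(1)] by (intro intg[where C=1]) (auto intro: borel_measurable_times thr_meas itr_meas)

lemma Rval_eq: assumes "valid_model M q" "itr M \<pi>"
  shows "Rval M q \<pi> = EY0 M q + (\<integral>x. tau q x * of_bool (\<pi> x) \<partial>M)"
proof -
  have "Rval M q \<pi> = (\<integral>x. mu0 q x + tau q x * of_bool (\<pi> x) \<partial>M)"
    unfolding Rval_def by (rule Bochner_Integration.integral_cong) (auto simp: tau_def algebra_simps)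
  also have "\<dots> = EY0 M q + (\<integral>x. tau q x * of_bool (\<pi> x) \<partial>M)"
    unfolding EY0_def
    by (rule Bochner_Integration.integral_add) (use assms mu0_bnd[OF assms(1)] in \<open>auto intro!: intg[where C=1] int_tau_pi\<close>)
  finally show ?thesis .
qed

lemma THR_nonneg: assumes "valid_model M q" shows "0 \<le> THRpol M q \<pi>"
  unfolding THRpol_def using thr_bnd[OF assms] by (intro Bochner_Integration.integral_nonneg) auto

lemma tau_le_B: assumes "valid_model M q" "itr M \<pi>"
  shows "(\<integral>x. tau q x * of_bool (\<pi> x) \<partial>M) \<le> (\<integral>x. tau q x * of_bool (tau q x > 0) \<partial>M)"
  by (rule integral_mono) (use assms in \<open>auto intro!: int_tau_pi simp: itr_def\<close>)

lemma lagr: assumes "valid_model M q" "itr M \<pi>" "0 \<le> \<beta>"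
  shows "THRpol M q (\<lambda>x. \<beta> * tau q x - THRx q x > 0) - \<beta> * (\<integral>x. tau q x * of_bool (\<beta> * tau q x - THRx q x > 0) \<partial>M)
     \<le> THRpol M q \<pi> - \<beta> * (\<integral>x. tau q x * of_bool (\<pi> x) \<partial>M)"
proof -
  have ip: "itr M (\<lambda>x. \<beta> * tau q x - THRx q x > 0)" unfolding itr_def using assms(1) by measurable
  let ?p = "\<lambda>x. \<beta> * tau q x - THRx q x > 0"
  have "(\<integral>x. THRx q x * of_bool (?p x) - \<beta> * (tau q x * of_bool (?p x)) \<partial>M)
      \<le> (\<integral>x. THRx q x * of_bool (\<pi> x) - \<beta> * (tau q x * of_bool (\<pi> x)) \<partial>M)"
    apply (rule integral_mono)
    using assms ip apply (auto intro!: Bochner_Integration.integrable_diff integrable_mult_right int_tau_pi int_thr_pi)[2]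
    using assms(3) by (auto simp: algebra_simps mult_le_cancel_left)
  then show ?thesis unfolding THRpol_def
    using assms ip by (simp add: Bochner_Integration.integral_diff int_tau_pi int_thr_pi)
qed


lemma noopt: assumes vm: "valid_model M q" and "EY0 M q + (\<integral>x. tau q x * of_bool (tau q x > 0) \<partial>M) < lam"
  shows "\<not> (\<exists>\<pi>. optimal M q lam \<pi>)"
proof
  assume "\<exists>\<pi>. optimal M q lam \<pi>"
  then obtain \<pi> where "itr M \<pi>" "Rval M q \<pi> \<ge> lam" unfolding optimal_def feasible_def by blast
  with Rval_eq[OF vm] tau_le_B[OF vm] assms(2) show False by fastforce
qed

lemma betaopt: assumes vm: "valid_model M q" and lt: "EY0 M q < lam"
  and eq: "EY0 M q + (\<integral>x. tau q x * of_bool (\<beta> * tau q x - THRx q x > 0) \<partial>M) = lam"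
  shows "optimal M q lam (\<lambda>x. \<beta> * tau q x - THRx q x > 0)"
proof -
  let ?p = "\<lambda>x. \<beta> * tau q x - THRx q x > 0"
  have ip: "itr M ?p" unfolding itr_def using vm by measurable
  have b: "\<beta> > 0"
  proof (rule ccontr)
    assume "\<not> \<beta> > 0"
    have pw: "tau q x * of_bool (?p x) \<le> 0" for x
    proof (cases "?p x")
      case True
      then have "\<beta> * tau q x > 0" using thr_bnd[OF vm, of x] by linarith
      then have "tau q x < 0" using \<open>\<not> \<beta> > 0\<close> by (simp add: zero_less_mult_iff)
      then show ?thesis by simp
    qed simp
    have "(\<integral>x. tau q x * of_bool (?p x) \<partial>M) \<le> (\<integral>x. 0 \<partial>M)"
      by (intro integral_mono int_tau_pi[OF vm ip] pw) simp
    then show False using eq lt by simp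
  qed
  have feas: "feasible M q lam ?p" unfolding feasible_def using ip Rval_eq[OF vm ip] eq by simp
  show ?thesis unfolding optimal_def
  proof (intro conjI allI impI feas)
    fix \<pi>' assume "feasible M q lam \<pi>'"
    then have i': "itr M \<pi>'" and r: "lam \<le> Rval M q \<pi>'" unfolding feasible_def by auto
    have "lam - EY0 M q \<le> (\<integral>x. tau q x * of_bool (\<pi>' x) \<partial>M)" using r Rval_eq[OF vm i'] by simp
    then have "\<beta> * (\<integral>x. tau q x * of_bool (?p x) \<partial>M) \<le> \<beta> * (\<integral>x. tau q x * of_bool (\<pi>' x) \<partial>M)"
      using eq b by (intro mult_left_mono) auto
    then show "THRpol M q ?p \<le> THRpol M q \<pi>'" using lagr[OF vm i', of \<beta>] b by linarith
  qed
qed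

theorem theoremS1:
  fixes M :: "'x measure" and q :: "'x \<Rightarrow> bool \<Rightarrow> bool \<Rightarrow> real" and lam :: real
  assumes "valid_model M q"
  defines "A \<equiv> (\<integral>x. tau q x * of_bool (THRx q x = 0) \<partial>M)"
      and "B \<equiv> (\<integral>x. tau q x * of_bool (tau q x > 0) \<partial>M)"
  shows
    \<comment> \<open>(a)\<close>
    "(lam \<le> EY0 M q \<longrightarrow> optimal M q lam (\<lambda>x. False) \<and> THRpol M q (\<lambda>x. False) = 0)
     \<comment> \<open>(b)\<close>
     \<and> (A > 0 \<longrightarrow>
          (EY0 M q < lam \<and> lam \<le> EY0 M q + A \<longrightarrow>
             optimal M q lam (\<lambda>x. THRx q x = 0) \<and> THRpol M q (\<lambda>x. THRx q x = 0) = 0)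
        \<and> (EY0 M q + A < lam \<and> lam \<le> EY0 M q + B \<longrightarrow>
             (\<forall>\<beta>. EY0 M q + (\<integral>x. tau q x * of_bool (\<beta> * tau q x - THRx q x > 0) \<partial>M) = lam \<longrightarrow>
                optimal M q lam (\<lambda>x. \<beta> * tau q x - THRx q x > 0)))
        \<and> (EY0 M q + B < lam \<longrightarrow> \<not> (\<exists>\<pi>. optimal M q lam \<pi>)))
     \<comment> \<open>(c)\<close>
     \<and> (A \<le> 0 \<longrightarrow>
          (EY0 M q < lam \<and> lam \<le> EY0 M q + B \<longrightarrow>
             (\<forall>\<beta>. EY0 M q + (\<integral>x. tau q x * of_bool (\<beta> * tau q x - THRx q x > 0) \<partial>M) = lam \<longrightarrow>
                optimal M q lam (\<lambda>x. \<beta> * tau q x - THRx q x > 0)))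
        \<and> (EY0 M q + B < lam \<longrightarrow> \<not> (\<exists>\<pi>. optimal M q lam \<pi>)))"
proof -
  note vm = assms(1)
  have i0: "itr M (\<lambda>x. False)" unfolding itr_def by simp
  have t0: "THRpol M q (\<lambda>x. False) = 0" unfolding THRpol_def by simp
  have iz: "itr M (\<lambda>x. THRx q x = 0)" unfolding itr_def using vm by measurable
  have tz: "THRpol M q (\<lambda>x. THRx q x = 0) = 0" unfolding THRpol_def
    by (rule Bochner_Integration.integral_eq_zero_AE) auto
  have pa: "lam \<le> EY0 M q \<longrightarrow> optimal M q lam (\<lambda>x. False) \<and> THRpol M q (\<lambda>x. False) = 0"
    using i0 t0 Rval_eq[OF vm i0] THR_nonneg[OF vm]
    by (auto simp: optimal_def feasible_def)
  have pb: "EY0 M q < lam \<and> lam \<le> EY0 M q + A \<longrightarrow>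
             optimal M q lam (\<lambda>x. THRx q x = 0) \<and> THRpol M q (\<lambda>x. THRx q x = 0) = 0"
    using iz tz Rval_eq[OF vm iz] THR_nonneg[OF vm]
    by (auto simp: optimal_def feasible_def A_def)
  show ?thesis
    using pa pb noopt[OF vm] betaopt[OF vm] unfolding B_def
    by (smt (verit))
qed

end
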